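(* For every fixed integer $k\geq 0$ there exist constants $q^*_k$ and $C^*_k$ (depending only on $k$) such that for all integers $q\geq q^*_k$, $$\frac{2^q}{\binom{q}{\leq k}} \;\leq\; F^*_k(q)\;\leq\; \frac{2^q}{\binom{q}{\leq k}}+C^*_k .$$
   Context: Pathological liar game: fix integers $q,k\geq 0$. A state is a vector $\vec{x}=(x_0,\ldots,x_k)$ of nonnegative integers ($x_i$ = number of elements currently carrying $i$ lies; elements with $k+1$ lies are discarded). In each of $q$ rounds Paul chooses a legal question $\vec{a}=(a_0,\ldots,a_k)$ with integers $0\leq a_i\leq x_i$, and Carole answers Y or N; the new state is $Y(\vec{x},\vec{a})=(a_0,\,a_1+x_0-a_0,\,\ldots,\,a_k+x_{k-1}-a_{k-1})$ or $N(\vec{x},\vec{a})=(x_0-a_0,\,x_1-a_1+a_0,\,\ldots,\,x_k-a_k+a_{k-1})$ respectively. Paul wins the pathological game iff after $q$ rounds the state satisfies $\sum_{i=0}^k x_i\geq 1$. $F^*_k(q)$ denotes the minimum $n$ such that Paul has a winning strategy in the $q$-round pathological liar game with $k$ lies and initial state $(n,0,\ldots,0)$. Notation: $\binom{q}{\leq m}=\sum_{j=0}^m\binom{q}{j}$. *)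

theory Defs
  imports Complex_Main
begin

text \<open>States and questions are functions nat => nat; only indices 0..k are meaningful.
  Components above k are set to 0 by the transition maps.\<close>

definition legal :: "nat \<Rightarrow> (nat \<Rightarrow> nat) \<Rightarrow> (nat \<Rightarrow> nat) \<Rightarrow> bool" where
  "legal k x a \<longleftrightarrow> (\<forall>i\<le>k. a i \<le> x i)"

definition Yst :: "nat \<Rightarrow> (nat \<Rightarrow> nat) \<Rightarrow> (nat \<Rightarrow> nat) \<Rightarrow> (nat \<Rightarrow> nat)" where
  "Yst k x a = (\<lambda>i. if i = 0 then a 0
                     else if i \<le> k then a i + (x (i - 1) - a (i - 1)) else 0)"

definition Nst :: "nat \<Rightarrow> (nat \<Rightarrow> nat) \<Rightarrow> (nat \<Rightarrow> nat) \<Rightarrow> (nat \<Rightarrow> nat)" where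
  "Nst k x a = (\<lambda>i. if i = 0 then x 0 - a 0
                     else if i \<le> k then (x i - a i) + a (i - 1) else 0)"

fun paul_wins :: "nat \<Rightarrow> nat \<Rightarrow> (nat \<Rightarrow> nat) \<Rightarrow> bool" where
  "paul_wins k 0 x \<longleftrightarrow> (\<Sum>i\<le>k. x i) \<ge> 1"
| "paul_wins k (Suc q) x \<longleftrightarrow>
     (\<exists>a. legal k x a \<and> paul_wins k q (Yst k x a) \<and> paul_wins k q (Nst k x a))"

definition init_state :: "nat \<Rightarrow> (nat \<Rightarrow> nat)" where
  "init_state n = (\<lambda>i. if i = 0 then n else 0)"

definition Fstar :: "nat \<Rightarrow> nat \<Rightarrow> nat" where
  "Fstar k q = (LEAST n. paul_wins k q (init_state n))"

definition binom_le :: "nat \<Rightarrow> nat \<Rightarrow> nat" where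
  "binom_le q m = (\<Sum>j\<le>m. q choose j)"

end

theory Submission imports Defs begin

definition wt :: "nat \<Rightarrow> nat \<Rightarrow> (nat \<Rightarrow> nat) \<Rightarrow> nat" where
  "wt k r x = (\<Sum>i\<le>k. x i * binom_le r (k - i))"

lemma bl_zero_r [simp]: "binom_le 0 j = 1"
  unfolding binom_le_def by (induction j) auto

lemma bl_zero_j [simp]: "binom_le r 0 = 1"
  unfolding binom_le_def by simp

lemma bl_Suc: "binom_le (Suc r) (Suc j) = binom_le r (Suc j) + binom_le r j"
proof -
  have "binom_le (Suc r) (Suc j) = 1 + (\<Sum>i\<le>j. (r choose i) + (r choose Suc i))"
    unfolding binom_le_def by (simp add: sum.atMost_Suc_shift del: sum.atMost_Suc)
  also have "\<dots> = 1 + (\<Sum>i\<le>j. r choose Suc i) + binom_le r j"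
    unfolding binom_le_def by (simp add: sum.distrib)
  also have "1 + (\<Sum>i\<le>j. r choose Suc i) = binom_le r (Suc j)"
    unfolding binom_le_def by (simp add: sum.atMost_Suc_shift del: sum.atMost_Suc)
  finally show ?thesis .
qed

lemma bl_Suc': "0 < j \<Longrightarrow> binom_le (Suc r) j = binom_le r j + binom_le r (j - 1)"
  using bl_Suc[of r "j - 1"] by simp

lemma bl_mono: "j \<le> j' \<Longrightarrow> binom_le r j \<le> binom_le r j'"
  unfolding binom_le_def by (rule sum_mono2) auto

lemma bl_pos: "1 \<le> binom_le r j"
  using bl_mono[of 0 j r] by simp

lemma bl_le_pow: "binom_le r j \<le> 2 ^ r"
proof -
  have "binom_le r j \<le> (\<Sum>i\<le>r. r choose i)"
  proof (cases "j \<le> r")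
    case True
    then show ?thesis unfolding binom_le_def by (intro sum_mono2) auto
  next
    case False
    then have "(\<Sum>i\<le>j. r choose i) = (\<Sum>i\<le>r. r choose i)"
      by (intro sum.mono_neutral_right) auto
    then show ?thesis unfolding binom_le_def by simp
  qed
  also have "\<dots> = 2 ^ r" by (rule choose_row_sum)
  finally show ?thesis .
qed

lemma bl_poly: "binom_le r k \<le> (r + 1) ^ k"
proof -
  have "binom_le r k \<le> (\<Sum>i\<le>k. (k choose i) * r ^ i)"
    unfolding binom_le_def
  proof (rule sum_mono)
    fix i assume "i \<in> {..k}"
    hence "1 \<le> k choose i" by (simp add: Suc_leI zero_less_binomial)
    moreover have "r choose i \<le> r ^ i"
      by (cases "i \<le> r") (auto simp: binomial_le_pow binomial_eq_0)
    ultimately show "r choose i \<le> (k choose i) * r ^ i"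
      by (metis mult_1 mult_le_mono)
  qed
  also have "\<dots> = (r + 1) ^ k"
    by (subst binomial_ring) simp
  finally show ?thesis .
qed

lemma bl_vand: "(\<Sum>i\<le>k. (t choose i) * binom_le r (k - i)) = binom_le (t + r) k"
proof (induction r arbitrary: k)
  case 0
  then show ?case by (simp add: binom_le_def[of t])
next
  case (Suc r)
  show ?case
  proof (cases k)
    case 0
    then show ?thesis by simp
  next
    case (Suc k')
    have "(\<Sum>i\<le>Suc k'. (t choose i) * binom_le (Suc r) (Suc k' - i))
        = (\<Sum>i\<le>k'. (t choose i) * binom_le (Suc r) (Suc k' - i)) + (t choose Suc k')"
      by simp
    also have "(\<Sum>i\<le>k'. (t choose i) * binom_le (Suc r) (Suc k' - i))
        = (\<Sum>i\<le>k'. (t choose i) * binom_le r (Suc k' - i)) + (\<Sum>i\<le>k'. (t choose i) * binom_le r (k' - i))"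
      by (simp add: sum.distrib[symmetric] Suc_diff_le bl_Suc algebra_simps)
    finally have "(\<Sum>i\<le>Suc k'. (t choose i) * binom_le (Suc r) (Suc k' - i))
       = (\<Sum>i\<le>Suc k'. (t choose i) * binom_le r (Suc k' - i)) + (\<Sum>i\<le>k'. (t choose i) * binom_le r (k' - i))"
      by simp
    also have "\<dots> = binom_le (t + r) (Suc k') + binom_le (t + r) k'"
      using Suc.IH by simp
    also have "\<dots> = binom_le (t + Suc r) (Suc k')" by (simp add: bl_Suc)
    finally show ?thesis using Suc by simp
  qed
qed

lemma poly_exp:
  fixes c m :: nat
  assumes "1 \<le> c" "c * 2 ^ m * (m + 1) ^ (m + 1) \<le> r"
  shows "c * (r + 1) ^ m \<le> 2 ^ r"
proof -
  have "0 < c * 2 ^ m * (m + 1) ^ (m + 1)" using assms(1) by simp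
  hence r1: "1 \<le> r" using assms(2) by linarith
  have mr: "m + 1 \<le> r"
  proof -
    have "m + 1 \<le> (m + 1) ^ (m + 1)" using self_le_power[of "m+1" "m+1"] by simp
    also have "\<dots> \<le> c * 2 ^ m * (m + 1) ^ (m + 1)" using assms(1) by simp
    finally show ?thesis using assms(2) by simp
  qed
  define R where "R = real r"
  define K where "K = real (m + 1) ^ (m + 1)"
  have Kpos: "0 < K" unfolding K_def by simp
  have R1: "1 \<le> R" using r1 unfolding R_def by simp
  have "real (c * 2 ^ m * (m + 1) ^ (m + 1)) \<le> real r" using assms(2) by (simp only: of_nat_le_iff)
  hence hyp: "real c * 2 ^ m * K \<le> R" unfolding K_def R_def by (simp only: of_nat_mult of_nat_power of_nat_numeral)
  have "R + 1 \<le> 2 * R" using R1 by simp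
  hence "(R + 1) ^ m \<le> (2 * R) ^ m" by (intro power_mono) (use R1 in auto)
  hence A: "real c * (R + 1) ^ m \<le> real c * 2 ^ m * R ^ m"
    by (simp add: power_mult_distrib mult_left_mono mult.assoc)
  have "real c * 2 ^ m * K * R ^ m \<le> R * R ^ m"
    using hyp R1 by (intro mult_right_mono) auto
  hence "real c * 2 ^ m * R ^ m * K \<le> R ^ (m + 1)" by (simp add: mult_ac)
  hence "real c * 2 ^ m * R ^ m \<le> R ^ (m + 1) / K" using Kpos by (simp add: pos_le_divide_eq)
  also have "R ^ (m + 1) / K = (R / real (m + 1)) ^ (m + 1)" unfolding K_def by (simp add: power_divide)
  also have "\<dots> \<le> real (r choose (m + 1))" unfolding R_def using mr by (rule binomial_ge_n_over_k_pow_k)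
  also have "\<dots> \<le> real ((2::nat) ^ r)" using binomial_le_pow2[of r "m+1"] by (simp only: of_nat_le_iff)
  finally have "real c * (R + 1) ^ m \<le> real ((2::nat) ^ r)" using A by linarith
  hence "real (c * (r + 1) ^ m) \<le> real ((2::nat) ^ r)" unfolding R_def by (simp add: add.commute)
  thus ?thesis by (simp only: of_nat_le_iff)
qed

lemma Ysum: "m \<le> k \<Longrightarrow> (\<Sum>i\<le>m. Yst k x a i * f i) = (\<Sum>i\<le>m. a i * f i) + (\<Sum>i<m. (x i - a i) * f (Suc i))"
  by (induction m) (auto simp: Yst_def algebra_simps)

lemma Nsum: "m \<le> k \<Longrightarrow> (\<Sum>i\<le>m. Nst k x a i * f i) = (\<Sum>i\<le>m. (x i - a i) * f i) + (\<Sum>i<m. a i * f (Suc i))"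
  by (induction m) (auto simp: Nst_def algebra_simps)

definition Aw :: "nat \<Rightarrow> nat \<Rightarrow> (nat \<Rightarrow> nat) \<Rightarrow> (nat \<Rightarrow> nat) \<Rightarrow> nat" where
  "Aw k r x a = (\<Sum>i<k. a i * binom_le r (k - i) + (x i - a i) * binom_le r (k - Suc i))"

definition Bw :: "nat \<Rightarrow> nat \<Rightarrow> (nat \<Rightarrow> nat) \<Rightarrow> (nat \<Rightarrow> nat) \<Rightarrow> nat" where
  "Bw k r x a = (\<Sum>i<k. (x i - a i) * binom_le r (k - i) + a i * binom_le r (k - Suc i))"

lemma wtY: "wt k r (Yst k x a) = Aw k r x a + a k"
proof -
  have "wt k r (Yst k x a) = (\<Sum>i\<le>k. a i * binom_le r (k - i)) + (\<Sum>i<k. (x i - a i) * binom_le r (k - Suc i))"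
    unfolding wt_def by (rule Ysum) simp
  also have "(\<Sum>i\<le>k. a i * binom_le r (k - i)) = (\<Sum>i<k. a i * binom_le r (k - i)) + a k"
    by (simp add: lessThan_Suc_atMost[symmetric])
  finally show ?thesis unfolding Aw_def by (simp add: sum.distrib)
qed

lemma wtN: "wt k r (Nst k x a) = Bw k r x a + (x k - a k)"
proof -
  have "wt k r (Nst k x a) = (\<Sum>i\<le>k. (x i - a i) * binom_le r (k - i)) + (\<Sum>i<k. a i * binom_le r (k - Suc i))"
    unfolding wt_def by (rule Nsum) simp
  also have "(\<Sum>i\<le>k. (x i - a i) * binom_le r (k - i)) = (\<Sum>i<k. (x i - a i) * binom_le r (k - i)) + (x k - a k)"
    by (simp add: lessThan_Suc_atMost[symmetric])
  finally show ?thesis unfolding Bw_def by (simp add: sum.distrib)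
qed

lemma wt_split:
  assumes "\<forall>i<k. a i \<le> x i"
  shows "wt k (Suc r) x = Aw k r x a + Bw k r x a + x k"
proof -
  have "wt k (Suc r) x = (\<Sum>i<k. x i * binom_le (Suc r) (k - i)) + x k"
    unfolding wt_def by (simp add: lessThan_Suc_atMost[symmetric])
  also have "(\<Sum>i<k. x i * binom_le (Suc r) (k - i)) = Aw k r x a + Bw k r x a"
    unfolding Aw_def Bw_def sum.distrib[symmetric]
  proof (rule sum.cong)
    fix i assume "i \<in> {..<k}"
    hence ik: "i < k" "a i \<le> x i" using assms by auto
    hence "k - i = Suc (k - Suc i)" by simp
    hence "binom_le (Suc r) (k - i) = binom_le r (k - i) + binom_le r (k - Suc i)"
      by (simp add: bl_Suc)
    moreover have "x i = a i + (x i - a i)" using ik by simp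
    ultimately show "x i * binom_le (Suc r) (k - i) =
      a i * binom_le r (k - i) + (x i - a i) * binom_le r (k - Suc i) +
      ((x i - a i) * binom_le r (k - i) + a i * binom_le r (k - Suc i))"
      by (metis (no_types, lifting) add.commute add.left_commute distrib_left distrib_right)
  qed simp
  finally show ?thesis .
qed

lemma legal_low: "legal k x a \<Longrightarrow> \<forall>i<k. a i \<le> x i"
  unfolding legal_def by auto

lemma lower: "paul_wins k r x \<Longrightarrow> 2 ^ r \<le> wt k r x"
proof (induction r arbitrary: x)
  case 0
  then show ?case by (simp add: wt_def)
next
  case (Suc r)
  then obtain a where a: "legal k x a" "paul_wins k r (Yst k x a)" "paul_wins k r (Nst k x a)" by auto
  have "a k \<le> x k" using a(1) unfolding legal_def by auto
  hence "wt k (Suc r) x = wt k r (Yst k x a) + wt k r (Nst k x a)"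
    using wt_split[OF legal_low[OF a(1)], of r] by (simp add: wtY wtN)
  moreover have "2 ^ r \<le> wt k r (Yst k x a)" "2 ^ r \<le> wt k r (Nst k x a)"
    using Suc.IH a by auto
  ultimately show ?case by simp
qed

lemma win0: "1 \<le> wt k 0 x \<Longrightarrow> paul_wins k 0 x"
  by (simp add: wt_def)

lemma Aw_le: "\<forall>i<k. a i \<le> x i \<Longrightarrow> Aw k r x a \<le> (\<Sum>i<k. x i) * binom_le r k"
  unfolding Aw_def sum_distrib_right
proof (rule sum_mono)
  fix i assume "\<forall>i<k. a i \<le> x i" "i \<in> {..<k}"
  hence "a i \<le> x i" by auto
  moreover have "binom_le r (k - i) \<le> binom_le r k" "binom_le r (k - Suc i) \<le> binom_le r k"
    by (auto intro: bl_mono)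
  ultimately have "a i * binom_le r (k - i) + (x i - a i) * binom_le r (k - Suc i)
     \<le> a i * binom_le r k + (x i - a i) * binom_le r k"
    by (intro add_mono mult_left_mono) auto
  also have "\<dots> = x i * binom_le r k" using \<open>a i \<le> x i\<close> by (simp add: distrib_right[symmetric])
  finally show "a i * binom_le r (k - i) + (x i - a i) * binom_le r (k - Suc i) \<le> x i * binom_le r k" .
qed

lemma Bw_le: "\<forall>i<k. a i \<le> x i \<Longrightarrow> Bw k r x a \<le> (\<Sum>i<k. x i) * binom_le r k"
  unfolding Bw_def sum_distrib_right
proof (rule sum_mono)
  fix i assume "\<forall>i<k. a i \<le> x i" "i \<in> {..<k}"
  hence "a i \<le> x i" by auto
  moreover have "binom_le r (k - i) \<le> binom_le r k" "binom_le r (k - Suc i) \<le> binom_le r k"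
    by (auto intro: bl_mono)
  ultimately have "(x i - a i) * binom_le r (k - i) + a i * binom_le r (k - Suc i)
     \<le> (x i - a i) * binom_le r k + a i * binom_le r k"
    by (intro add_mono mult_left_mono) auto
  also have "\<dots> = x i * binom_le r k" using \<open>a i \<le> x i\<close> by (simp add: distrib_right[symmetric])
  finally show "(x i - a i) * binom_le r (k - i) + a i * binom_le r (k - Suc i) \<le> x i * binom_le r k" .
qed

lemma Aw_upd [simp]: "Aw k r x (a(k := v)) = Aw k r x a"
  unfolding Aw_def by (rule sum.cong) auto

lemma Bw_upd [simp]: "Bw k r x (a(k := v)) = Bw k r x a"
  unfolding Bw_def by (rule sum.cong) auto

lemma Yst_upd: "i < k \<Longrightarrow> Yst k x (a(k := v)) i = Yst k x a i"
  unfolding Yst_def by auto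

lemma Nst_upd: "i < k \<Longrightarrow> Nst k x (a(k := v)) i = Nst k x a i"
  unfolding Nst_def by auto

lemma fill:
  assumes low: "\<forall>i<k. a i \<le> x i"
    and A: "Aw k r x a \<le> 2 ^ r" and B: "Bw k r x a \<le> 2 ^ r"
    and W: "2 ^ Suc r \<le> wt k (Suc r) x"
  shows "legal k x (a(k := 2 ^ r - Aw k r x a)) \<and>
         2 ^ r \<le> wt k r (Yst k x (a(k := 2 ^ r - Aw k r x a))) \<and>
         2 ^ r \<le> wt k r (Nst k x (a(k := 2 ^ r - Aw k r x a)))"
proof -
  let ?a = "a(k := 2 ^ r - Aw k r x a)"
  have sp: "wt k (Suc r) x = Aw k r x a + Bw k r x a + x k" by (rule wt_split[OF low])
  have ak: "2 ^ r - Aw k r x a \<le> x k" using sp W A B by simp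
  have "legal k x ?a" unfolding legal_def using low ak by auto
  moreover have "wt k r (Yst k x ?a) = 2 ^ r" using A by (simp add: wtY)
  moreover have "wt k r (Nst k x ?a) = Bw k r x a + (x k - (2 ^ r - Aw k r x a))" by (simp add: wtN)
  moreover have "2 ^ r \<le> Bw k r x a + (x k - (2 ^ r - Aw k r x a))" using sp W A ak by simp
  ultimately show ?thesis by simp
qed

definition lowcnt :: "nat \<Rightarrow> (nat \<Rightarrow> nat) \<Rightarrow> nat" where
  "lowcnt k x = (\<Sum>i<k. x i)"

definition phi :: "nat \<Rightarrow> (nat \<Rightarrow> nat) \<Rightarrow> nat" where
  "phi k x = (\<Sum>i\<le>k. x i * (k - i))"

lemma lowcnt_Y: "\<forall>i<k. a i \<le> x i \<Longrightarrow> lowcnt k (Yst k x a) \<le> lowcnt k x"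
proof (cases k)
  case 0 then show ?thesis by (simp add: lowcnt_def)
next
  case (Suc m)
  assume low: "\<forall>i<k. a i \<le> x i"
  have "lowcnt k (Yst k x a) = (\<Sum>i\<le>m. Yst k x a i * 1)"
    unfolding lowcnt_def Suc lessThan_Suc_atMost by simp
  also have "\<dots> = (\<Sum>i\<le>m. a i * 1) + (\<Sum>i<m. (x i - a i) * 1)"
    by (rule Ysum) (simp add: Suc)
  also have "\<dots> \<le> (\<Sum>i\<le>m. a i) + (\<Sum>i\<le>m. (x i - a i))"
    by (simp, intro add_mono sum_mono2) auto
  also have "\<dots> = (\<Sum>i\<le>m. x i)"
    unfolding sum.distrib[symmetric] using low Suc by (intro sum.cong) auto
  also have "\<dots> = lowcnt k x" unfolding lowcnt_def Suc lessThan_Suc_atMost by simp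
  finally show ?thesis .
qed

lemma lowcnt_N: "\<forall>i<k. a i \<le> x i \<Longrightarrow> lowcnt k (Nst k x a) \<le> lowcnt k x"
proof (cases k)
  case 0 then show ?thesis by (simp add: lowcnt_def)
next
  case (Suc m)
  assume low: "\<forall>i<k. a i \<le> x i"
  have "lowcnt k (Nst k x a) = (\<Sum>i\<le>m. Nst k x a i * 1)"
    unfolding lowcnt_def Suc lessThan_Suc_atMost by simp
  also have "\<dots> = (\<Sum>i\<le>m. (x i - a i) * 1) + (\<Sum>i<m. a i * 1)"
    by (rule Nsum) (simp add: Suc)
  also have "\<dots> \<le> (\<Sum>i\<le>m. (x i - a i)) + (\<Sum>i\<le>m. a i)"
    by (simp, intro add_mono sum_mono2) auto
  also have "\<dots> = (\<Sum>i\<le>m. x i)"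
    unfolding sum.distrib[symmetric] using low Suc by (intro sum.cong) auto
  also have "\<dots> = lowcnt k x" unfolding lowcnt_def Suc lessThan_Suc_atMost by simp
  finally show ?thesis .
qed

lemma phi_Y: "\<forall>i<k. a i \<le> x i \<Longrightarrow> phi k (Yst k x a) + (\<Sum>i<k. x i - a i) = phi k x"
proof -
  assume low: "\<forall>i<k. a i \<le> x i"
  have "phi k (Yst k x a) = (\<Sum>i\<le>k. a i * (k - i)) + (\<Sum>i<k. (x i - a i) * (k - Suc i))"
    unfolding phi_def by (rule Ysum) simp
  also have "(\<Sum>i\<le>k. a i * (k - i)) = (\<Sum>i<k. a i * (k - i))"
    by (simp add: lessThan_Suc_atMost[symmetric])
  finally have "phi k (Yst k x a) + (\<Sum>i<k. x i - a i) =
     (\<Sum>i<k. a i * (k - i) + ((x i - a i) * (k - Suc i) + (x i - a i)))"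
    by (simp add: sum.distrib)
  also have "\<dots> = (\<Sum>i<k. x i * (k - i))"
  proof (rule sum.cong)
    fix i assume "i \<in> {..<k}"
    hence "i < k" "a i \<le> x i" using low by auto
    hence "k - i = Suc (k - Suc i)" "x i = a i + (x i - a i)" by auto
    then show "a i * (k - i) + ((x i - a i) * (k - Suc i) + (x i - a i)) = x i * (k - i)"
      by (metis (no_types, lifting) distrib_right mult_Suc_right add.commute)
  qed simp
  also have "\<dots> = phi k x" unfolding phi_def by (simp add: lessThan_Suc_atMost[symmetric])
  finally show ?thesis .
qed

lemma phi_N: "\<forall>i<k. a i \<le> x i \<Longrightarrow> phi k (Nst k x a) + (\<Sum>i<k. a i) = phi k x"
proof -
  assume low: "\<forall>i<k. a i \<le> x i"
  have "phi k (Nst k x a) = (\<Sum>i\<le>k. (x i - a i) * (k - i)) + (\<Sum>i<k. a i * (k - Suc i))"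
    unfolding phi_def by (rule Nsum) simp
  also have "(\<Sum>i\<le>k. (x i - a i) * (k - i)) = (\<Sum>i<k. (x i - a i) * (k - i))"
    by (simp add: lessThan_Suc_atMost[symmetric])
  finally have "phi k (Nst k x a) + (\<Sum>i<k. a i) =
     (\<Sum>i<k. (x i - a i) * (k - i) + (a i * (k - Suc i) + a i))"
    by (simp add: sum.distrib)
  also have "\<dots> = (\<Sum>i<k. x i * (k - i))"
  proof (rule sum.cong)
    fix i assume "i \<in> {..<k}"
    hence "i < k" "a i \<le> x i" using low by auto
    hence "k - i = Suc (k - Suc i)" "x i = a i + (x i - a i)" by auto
    then show "(x i - a i) * (k - i) + (a i * (k - Suc i) + a i) = x i * (k - i)"
      by (metis (no_types, lifting) distrib_right mult_Suc_right add.commute)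
  qed simp
  also have "\<dots> = phi k x" unfolding phi_def by (simp add: lessThan_Suc_atMost[symmetric])
  finally show ?thesis .
qed


lemma E1: "lowcnt k x \<le> 1 \<Longrightarrow> 2 ^ r \<le> wt k r x \<Longrightarrow> paul_wins k r x"
proof (induction r arbitrary: x)
  case 0
  then show ?case using win0 by simp
next
  case (Suc r)
  let ?a0 = "\<lambda>i::nat. 0::nat"
  have low: "\<forall>i<k. ?a0 i \<le> x i" by simp
  have "Aw k r x ?a0 \<le> lowcnt k x * binom_le r k" using Aw_le[OF low] by (simp add: lowcnt_def)
  also have "\<dots> \<le> binom_le r k" using Suc.prems(1) by simp
  also have "\<dots> \<le> 2 ^ r" by (rule bl_le_pow)
  finally have A: "Aw k r x ?a0 \<le> 2 ^ r" .
  have "Bw k r x ?a0 \<le> lowcnt k x * binom_le r k" using Bw_le[OF low] by (simp add: lowcnt_def)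
  also have "\<dots> \<le> binom_le r k" using Suc.prems(1) by simp
  also have "\<dots> \<le> 2 ^ r" by (rule bl_le_pow)
  finally have B: "Bw k r x ?a0 \<le> 2 ^ r" .
  define a where "a = ?a0(k := 2 ^ r - Aw k r x ?a0)"
  have F: "legal k x a \<and> 2 ^ r \<le> wt k r (Yst k x a) \<and> 2 ^ r \<le> wt k r (Nst k x a)"
    unfolding a_def by (rule fill[OF low A B Suc.prems(2)])
  have low': "\<forall>i<k. a i \<le> x i" unfolding a_def by simp
  have "lowcnt k (Yst k x a) \<le> 1" using lowcnt_Y[OF low'] Suc.prems(1) by simp
  hence "paul_wins k r (Yst k x a)" using Suc.IH F by simp
  moreover have "lowcnt k (Nst k x a) \<le> 1" using lowcnt_N[OF low'] Suc.prems(1) by simp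
  hence "paul_wins k r (Nst k x a)" using Suc.IH F by simp
  ultimately show ?case using F by auto
qed

lemma lowcnt_le_phi: "lowcnt k x \<le> phi k x"
proof -
  have "lowcnt k x \<le> (\<Sum>i<k. x i * (k - i))"
    unfolding lowcnt_def by (rule sum_mono) auto
  also have "\<dots> = phi k x" unfolding phi_def by (simp add: lessThan_Suc_atMost[symmetric])
  finally show ?thesis .
qed

lemma E2:
  assumes HR: "\<forall>r\<ge>R0. 2 * M * binom_le r k \<le> 2 ^ r"
  shows "lowcnt k x \<le> M \<Longrightarrow> phi k x + R0 \<le> r \<Longrightarrow> 2 ^ r \<le> wt k r x \<Longrightarrow> paul_wins k r x"
proof (induction r arbitrary: x)
  case 0
  then show ?case using win0 by simp
next
  case (Suc r)
  show ?case
  proof (cases "lowcnt k x \<le> 1")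
    case True
    then show ?thesis using E1 Suc.prems by blast
  next
    case False
    hence l2: "2 \<le> lowcnt k x" by simp
    hence "2 \<le> phi k x" using lowcnt_le_phi[of k x] by simp
    hence rR0: "R0 \<le> r" using Suc.prems(2) by simp
    obtain i0 where i0: "i0 < k" "0 < x i0"
    proof -
      have "\<not> (\<forall>i<k. x i = 0)"
      proof
        assume "\<forall>i<k. x i = 0"
        hence "lowcnt k x = 0" unfolding lowcnt_def by simp
        thus False using l2 by simp
      qed
      thus ?thesis using that by auto
    qed
    let ?b = "\<lambda>i::nat. if i = i0 then 1 else (0::nat)"
    have low: "\<forall>i<k. ?b i \<le> x i" using i0 by auto
    have sb: "(\<Sum>i<k. ?b i) = 1" using i0 by (simp add: sum.delta)
    have sxb: "(\<Sum>i<k. x i - ?b i) = lowcnt k x - 1"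
      unfolding lowcnt_def using sum_subtractf_nat[of "{..<k}" ?b x] low sb by simp
    have MV: "M * binom_le r k \<le> 2 ^ r" using HR rR0 by fastforce
    have "Aw k r x ?b \<le> lowcnt k x * binom_le r k" using Aw_le[OF low] by (simp add: lowcnt_def)
    also have "\<dots> \<le> M * binom_le r k" using Suc.prems(1) by simp
    finally have A: "Aw k r x ?b \<le> 2 ^ r" using MV by simp
    have "Bw k r x ?b \<le> lowcnt k x * binom_le r k" using Bw_le[OF low] by (simp add: lowcnt_def)
    also have "\<dots> \<le> M * binom_le r k" using Suc.prems(1) by simp
    finally have B: "Bw k r x ?b \<le> 2 ^ r" using MV by simp
    define a where "a = ?b(k := 2 ^ r - Aw k r x ?b)"
    have F: "legal k x a \<and> 2 ^ r \<le> wt k r (Yst k x a) \<and> 2 ^ r \<le> wt k r (Nst k x a)"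
      unfolding a_def by (rule fill[OF low A B Suc.prems(3)])
    have low': "\<forall>i<k. a i \<le> x i" unfolding a_def using low by simp
    have ab: "\<forall>i<k. a i = ?b i" unfolding a_def by simp
    have "(\<Sum>i<k. x i - a i) = (\<Sum>i<k. x i - ?b i)" by (rule sum.cong) (use ab in auto)
    hence s1: "(\<Sum>i<k. x i - a i) = lowcnt k x - 1" using sxb by simp
    have "(\<Sum>i<k. a i) = (\<Sum>i<k. ?b i)" by (rule sum.cong) (use ab in auto)
    hence s2: "(\<Sum>i<k. a i) = 1" using sb by simp
    have "phi k (Yst k x a) + R0 \<le> r" using phi_Y[OF low'] s1 l2 Suc.prems(2) by simp
    moreover have "lowcnt k (Yst k x a) \<le> M" using lowcnt_Y[OF low'] Suc.prems(1) by simp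
    ultimately have "paul_wins k r (Yst k x a)" using Suc.IH F by simp
    moreover have "phi k (Nst k x a) + R0 \<le> r" using phi_N[OF low'] s2 Suc.prems(2) by simp
    moreover have "lowcnt k (Nst k x a) \<le> M" using lowcnt_N[OF low'] Suc.prems(1) by simp
    ultimately have "paul_wins k r (Nst k x a)" using Suc.IH F by simp
    with \<open>paul_wins k r (Yst k x a)\<close> show ?thesis using F by auto
  qed
qed


lemma bl_mono_r: "r \<le> r' \<Longrightarrow> binom_le r j \<le> binom_le r' j"
proof (induction r' rule: dec_induct)
  case base then show ?case by simp
next
  case (step m)
  have "binom_le m j \<le> binom_le (Suc m) j"
    by (cases j) (simp_all add: bl_Suc)
  then show ?case using step by simp
qed

definition hq :: "nat \<Rightarrow> (nat \<Rightarrow> nat) \<Rightarrow> nat \<Rightarrow> nat" where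
  "hq k x = (\<lambda>i. if i < k then (x i + 1) div 2 else if i = k then x k div 2 else 0)"

lemma hq_legal: "legal k x (hq k x)"
  unfolding legal_def hq_def by auto

lemma hq_low: "\<forall>i<k. hq k x i \<le> x i"
  unfolding hq_def by auto

lemma Ycomp:
  assumes "\<forall>j<k. a j = (x j + 1) div 2" "i < k"
  shows "2 * Yst k x a i \<le> x i + (if i = 0 then 0 else x (i - 1)) + 1"
proof (cases i)
  case 0 then show ?thesis using assms by (simp add: Yst_def)
next
  case (Suc j)
  then have "a i = (x i + 1) div 2" "a j = (x j + 1) div 2" using assms by auto
  then show ?thesis using assms Suc by (simp add: Yst_def)
qed

lemma Ncomp:
  assumes "\<forall>j<k. a j = (x j + 1) div 2" "i < k"
  shows "2 * Nst k x a i \<le> x i + (if i = 0 then 0 else x (i - 1)) + 1"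
proof (cases i)
  case 0 then show ?thesis using assms by (simp add: Nst_def)
next
  case (Suc j)
  then have "a i = (x i + 1) div 2" "a j = (x j + 1) div 2" using assms by auto
  then show ?thesis using assms Suc by (simp add: Nst_def)
qed

definition xb :: "nat \<Rightarrow> nat \<Rightarrow> nat \<Rightarrow> real" where
  "xb n t i = real n * real (t choose i) / 2 ^ t + real i + 1"

lemma xb_prop:
  assumes X: "\<forall>i<k. real (x i) \<le> xb n t i"
    and Y: "\<forall>i<k. 2 * y i \<le> x i + (if i = 0 then 0 else x (i - 1)) + 1"
  shows "\<forall>i<k. real (y i) \<le> xb n (Suc t) i"
proof (intro allI impI)
  fix i assume ik: "i < k"
  show "real (y i) \<le> xb n (Suc t) i"
  proof (cases i)
    case 0
    have "2 * y 0 \<le> x 0 + 1" using Y ik 0 by auto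
    hence "real (2 * y 0) \<le> real (x 0 + 1)" by (simp only: of_nat_le_iff)
    hence "real (2 * y 0) \<le> real (x 0) + 1" by simp
    moreover have "real (x 0) \<le> xb n t 0" using X ik 0 by blast
    hence "real (x 0) \<le> real n / 2 ^ t + 1" by (simp add: xb_def)
    ultimately have "2 * real (y 0) \<le> real n / 2 ^ t + 2" by simp
    hence "real (y 0) \<le> real n / 2 ^ Suc t + 1" by (simp add: field_simps)
    thus ?thesis using 0 by (simp add: xb_def)
  next
    case (Suc j)
    have "2 * y i \<le> x i + x j + 1" using Y ik Suc by auto
    hence "real (2 * y i) \<le> real (x i + x j + 1)" by (simp only: of_nat_le_iff)
    hence "real (2 * y i) \<le> real (x i) + real (x j) + 1" by simp
    moreover have "real (x i) \<le> xb n t i" "real (x j) \<le> xb n t j" using X ik Suc by auto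
    moreover have bb: "real (Suc t choose i) = real (t choose i) + real (t choose j)"
      using Suc by simp
    define A where "A = real n * real (t choose i) / 2 ^ t"
    define B where "B = real n * real (t choose j) / 2 ^ t"
    have "real n * real (Suc t choose i) / 2 ^ Suc t = (A + B) / 2"
      unfolding bb A_def B_def by (simp add: field_simps)
    hence "xb n (Suc t) i = (A + B) / 2 + real i + 1" unfolding xb_def by simp
    moreover have "xb n t i = A + real i + 1" "xb n t j = B + real j + 1"
      unfolding xb_def A_def B_def by simp_all
    moreover have "real i = real j + 1" using Suc by simp
    moreover have "real (2 * y i) = 2 * real (y i)" by simp
    ultimately show ?thesis by argo
  qed
qed

definition lw :: "nat \<Rightarrow> nat \<Rightarrow> (nat \<Rightarrow> nat) \<Rightarrow> nat" where
  "lw k r x = (\<Sum>i<k. x i * binom_le r (k - i))"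

lemma wt_lw: "wt k r x = lw k r x + x k"
  unfolding wt_def lw_def by (simp add: lessThan_Suc_atMost[symmetric])

lemma AB_lw: "\<forall>i<k. a i \<le> x i \<Longrightarrow> Aw k r x a + Bw k r x a = lw k (Suc r) x"
  using wt_split[of k a x r] wt_lw[of k "Suc r" x] by simp

lemma AB_half:
  assumes "\<forall>j<k. a j = (x j + 1) div 2"
  shows "Bw k r x a \<le> Aw k r x a \<and> Aw k r x a \<le> Bw k r x a + k * binom_le r k"
proof -
  have t: "(x i - a i) * binom_le r (k - i) + a i * binom_le r (k - Suc i)
            \<le> a i * binom_le r (k - i) + (x i - a i) * binom_le r (k - Suc i) \<and>
           a i * binom_le r (k - i) + (x i - a i) * binom_le r (k - Suc i)
            \<le> (x i - a i) * binom_le r (k - i) + a i * binom_le r (k - Suc i) + binom_le r k"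
    if "i < k" for i
  proof -
    have ai: "a i = (x i + 1) div 2" using assms that by auto
    define d where "d = a i - (x i - a i)"
    have d1: "d \<le> 1" "a i = (x i - a i) + d" using ai unfolding d_def by presburger+
    define u where "u = x i - a i"
    have V12: "binom_le r (k - Suc i) \<le> binom_le r (k - i)" "binom_le r (k - i) \<le> binom_le r k"
      by (auto intro: bl_mono)
    have e1: "a i * binom_le r (k - i) = u * binom_le r (k - i) + d * binom_le r (k - i)"
      using d1 unfolding u_def by (metis distrib_right)
    have e2: "a i * binom_le r (k - Suc i) = u * binom_le r (k - Suc i) + d * binom_le r (k - Suc i)"
      using d1 unfolding u_def by (metis distrib_right)
    have "d * binom_le r (k - Suc i) \<le> d * binom_le r (k - i)" using V12 by simp
    moreover have "d * binom_le r (k - i) \<le> binom_le r k" using d1 V12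
      by (metis le_trans mult_1 mult_le_mono1)
    ultimately show ?thesis unfolding e1 e2 u_def[symmetric] by simp
  qed
  have "Bw k r x a \<le> Aw k r x a" unfolding Aw_def Bw_def by (rule sum_mono) (use t in auto)
  moreover have "Aw k r x a \<le> (\<Sum>i<k. (x i - a i) * binom_le r (k - i) + a i * binom_le r (k - Suc i) + binom_le r k)"
    unfolding Aw_def by (rule sum_mono) (use t in auto)
  hence "Aw k r x a \<le> Bw k r x a + k * binom_le r k" unfolding Bw_def by (simp add: sum.distrib)
  ultimately show ?thesis by simp
qed

lemma lw_bound:
  assumes X: "\<forall>i<k. real (x i) \<le> xb n t i"
  shows "real (lw k r x) \<le> real n * (real (binom_le (t + r) k) - real (t choose k)) / 2 ^ t
            + real (k * k * binom_le r k)"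
proof -
  define S1 where "S1 = (\<Sum>i<k. real (t choose i) * real (binom_le r (k - i)))"
  define S2 where "S2 = (\<Sum>i<k. (real i + 1) * real (binom_le r (k - i)))"
  have "real (lw k r x) = (\<Sum>i<k. real (x i) * real (binom_le r (k - i)))"
    unfolding lw_def by simp
  also have "\<dots> \<le> (\<Sum>i<k. xb n t i * real (binom_le r (k - i)))"
    by (rule sum_mono) (use X in \<open>auto intro: mult_right_mono\<close>)
  also have "\<dots> = (\<Sum>i<k. real n / 2 ^ t * (real (t choose i) * real (binom_le r (k - i)))
       + (real i + 1) * real (binom_le r (k - i)))"
    unfolding xb_def by (rule sum.cong) (simp_all add: distrib_right)
  also have "\<dots> = real n * S1 / 2 ^ t + S2"
    unfolding S1_def S2_def by (simp add: sum.distrib sum_distrib_left sum_divide_distrib)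
  finally have h1: "real (lw k r x) \<le> real n * S1 / 2 ^ t + S2" .
  have "(\<Sum>i<k. (t choose i) * binom_le r (k - i)) + (t choose k) = binom_le (t + r) k"
    using bl_vand[of t r k] by (simp add: lessThan_Suc_atMost[symmetric])
  hence "real (\<Sum>i<k. (t choose i) * binom_le r (k - i)) = real (binom_le (t + r) k) - real (t choose k)"
    by (metis add_diff_cancel_right' of_nat_add)
  hence h2: "S1 = real (binom_le (t + r) k) - real (t choose k)" unfolding S1_def by simp
  have "S2 \<le> (\<Sum>i<k. real k * real (binom_le r k))"
    unfolding S2_def
  proof (rule sum_mono)
    fix i assume "i \<in> {..<k}"
    hence "real i + 1 \<le> real k" "real (binom_le r (k - i)) \<le> real (binom_le r k)" by (auto intro: bl_mono)
    thus "(real i + 1) * real (binom_le r (k - i)) \<le> real k * real (binom_le r k)"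
      by (intro mult_mono) auto
  qed
  hence h3: "S2 \<le> real (k * k * binom_le r k)" by simp
  have "real (lw k r x) \<le> real n * (real (binom_le (t + r) k) - real (t choose k)) / 2 ^ t + S2"
    using h1 unfolding h2 .
  thus ?thesis using h3 by (meson add_left_mono order_trans)
qed


lemma inv_wt_lem:
  fixes P :: real
  assumes P0: "0 \<le> P"
    and H: "2 ^ r + (if q - r \<le> T then (2 ^ T / 2 ^ (q - r) - 1) * P else 0) \<le> real (wt k r x)"
  shows "2 ^ r \<le> wt k r x"
proof -
  have "0 \<le> (if q - r \<le> T then (2 ^ T / 2 ^ (q - r) - 1) * P else (0::real))"
  proof (cases "q - r \<le> T")
    case True
    hence "(2::real) ^ (q - r) \<le> 2 ^ T" by (intro power_increasing) auto
    hence "1 \<le> (2::real) ^ T / 2 ^ (q - r)" by simp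
    thus ?thesis using True P0 by simp
  qed simp
  hence "(2::real) ^ r \<le> real (wt k r x)" using H by linarith
  hence "real ((2::nat) ^ r) \<le> real (wt k r x)" by simp
  thus ?thesis by (simp only: of_nat_le_iff)
qed

lemma endgame_lem:
  fixes k q n R0 Re :: nat
  assumes HR: "\<forall>r\<ge>R0. 2 * (k * k) * binom_le r k \<le> 2 ^ r"
    and Re: "Re = k * k * k + R0"
    and End: "\<forall>i<k. real n * real ((q - Re) choose i) / 2 ^ (q - Re) < 1"
    and X: "\<forall>i<k. real (x i) \<le> xb n (q - Re) i" and W: "2 ^ Re \<le> wt k Re x"
  shows "paul_wins k Re x"
proof -
  have xi: "x i \<le> k" if "i < k" for i
  proof -
    have "real (x i) \<le> real n * real ((q - Re) choose i) / 2 ^ (q - Re) + real i + 1"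
      using X that unfolding xb_def by blast
    moreover have "real n * real ((q - Re) choose i) / 2 ^ (q - Re) < 1" using End that by blast
    ultimately have "real (x i) < real i + 2" by linarith
    hence "x i \<le> i + 1" by linarith
    thus ?thesis using that by simp
  qed
  have lc: "lowcnt k x \<le> k * k"
  proof -
    have "lowcnt k x \<le> (\<Sum>i<k. k)" unfolding lowcnt_def by (rule sum_mono) (use xi in auto)
    thus ?thesis by simp
  qed
  have "phi k x = (\<Sum>i<k. x i * (k - i))" unfolding phi_def by (simp add: lessThan_Suc_atMost[symmetric])
  also have "\<dots> \<le> (\<Sum>i<k. x i * k)" by (rule sum_mono) auto
  also have "\<dots> = k * lowcnt k x" unfolding lowcnt_def by (simp add: sum_distrib_left mult.commute)
  also have "\<dots> \<le> k * (k * k)" using lc by simp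
  finally have "phi k x + R0 \<le> Re" using Re by simp
  thus ?thesis using E2[OF HR lc _ W] by simp
qed

lemma main:
  fixes k q n T R0 Re :: nat and P :: real
  assumes HR: "\<forall>r\<ge>R0. 2 * (k * k) * binom_le r k \<le> 2 ^ r"
    and Re: "Re = k * k * k + R0"
    and End: "\<forall>i<k. real n * real ((q - Re) choose i) / 2 ^ (q - Re) < 1"
    and Mid: "\<forall>r. Re < r \<longrightarrow> r \<le> q \<longrightarrow> T \<le> q - r \<longrightarrow>
        real n * (real (binom_le q k) - real ((q - r) choose k)) / 2 ^ (q - r)
          + real ((k * k + k) * binom_le r k) \<le> 2 ^ r"
    and Pb: "real (k * binom_le q k + 1) \<le> P"
  shows "Re \<le> r \<Longrightarrow> r \<le> q \<Longrightarrow> (\<forall>i<k. real (x i) \<le> xb n (q - r) i) \<Longrightarrow>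
     2 ^ r + (if q - r \<le> T then (2 ^ T / 2 ^ (q - r) - 1) * P else 0) \<le> real (wt k r x) \<Longrightarrow>
     paul_wins k r x"
proof -
  have "0 \<le> real (k * binom_le q k + 1)" by simp
  hence P0: "0 \<le> P" using Pb by linarith
  note inv_wt = inv_wt_lem[OF P0]
  note endgame = endgame_lem[OF HR Re End]
  show "Re \<le> r \<Longrightarrow> r \<le> q \<Longrightarrow> (\<forall>i<k. real (x i) \<le> xb n (q - r) i) \<Longrightarrow>
     2 ^ r + (if q - r \<le> T then (2 ^ T / 2 ^ (q - r) - 1) * P else 0) \<le> real (wt k r x) \<Longrightarrow>
     paul_wins k r x"
  proof (induction r arbitrary: x)
    case 0
    hence R: "Re = 0" by simp
    have "paul_wins k Re x" by (rule endgame) (use 0 R inv_wt[OF 0(4)] in simp_all)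
    thus ?case using R by simp
  next
    case (Suc r)
    show ?case
    proof (cases "Suc r = Re")
      case True
      have "paul_wins k Re x" by (rule endgame) (use Suc.prems(3) True inv_wt[OF Suc.prems(4)] in simp_all)
      thus ?thesis using True by simp
    next
      case False
      hence rRe: "Re \<le> r" using Suc.prems(1) by simp
      have rq: "r < q" using Suc.prems(2) by simp
      define t where "t = q - Suc r"
      have qr: "q - r = Suc t" using rq unfolding t_def by simp
      have X: "\<forall>i<k. real (x i) \<le> xb n t i" using Suc.prems(3) unfolding t_def .
      have W: "2 ^ Suc r \<le> wt k (Suc r) x" by (rule inv_wt[OF Suc.prems(4)])
      have Vq: "binom_le r k \<le> binom_le q k" using rq by (intro bl_mono_r) simp
      show ?thesis
      proof (cases "t < T")
        case True
        define a where "a = hq k x"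
        have low: "\<forall>i<k. a i \<le> x i" unfolding a_def by (rule hq_low)
        have ah: "\<forall>j<k. a j = (x j + 1) div 2" unfolding a_def hq_def by simp
        have ak: "a k = x k div 2" unfolding a_def hq_def by simp
        have AB: "Bw k r x a \<le> Aw k r x a" "Aw k r x a \<le> Bw k r x a + k * binom_le r k"
          using AB_half[OF ah] by auto
        have sp: "wt k (Suc r) x = Aw k r x a + Bw k r x a + x k" by (rule wt_split[OF low])
        have h1: "x k \<le> 2 * (x k div 2) + 1" "x k \<le> 2 * (x k - x k div 2)" by presburger+
        have y1: "wt k (Suc r) x \<le> 2 * wt k r (Yst k x a) + (k * binom_le r k + 1)"
          unfolding wtY sp ak using AB h1 by simp
        have y2: "wt k (Suc r) x \<le> 2 * wt k r (Nst k x a) + (k * binom_le r k + 1)"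
          unfolding wtN sp ak using AB h1 by simp
        have "k * binom_le r k + 1 \<le> k * binom_le q k + 1" using Vq by simp
        hence kV: "real (k * binom_le r k + 1) \<le> P"
          using Pb by (meson of_nat_le_iff order_trans)
        have Wt: "2 ^ Suc r + (2 ^ T / 2 ^ t - 1) * P \<le> real (wt k (Suc r) x)"
          using Suc.prems(4) True unfolding t_def by simp
        have key: "2 ^ r + (2 ^ T / 2 ^ Suc t - 1) * P \<le> real w"
          if "wt k (Suc r) x \<le> 2 * w + (k * binom_le r k + 1)" for w
        proof -
          have "real (wt k (Suc r) x) \<le> real (2 * w + (k * binom_le r k + 1))"
            using that by (simp only: of_nat_le_iff)
          hence "real (wt k (Suc r) x) \<le> 2 * real w + real (k * binom_le r k + 1)" by simp
          hence "real (wt k (Suc r) x) \<le> 2 * real w + P" using kV by linarith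
          hence "2 ^ Suc r + (2 ^ T / 2 ^ t - 1) * P \<le> 2 * real w + P" using Wt by simp
          thus ?thesis by (simp add: field_simps)
        qed
        have cY: "paul_wins k r (Yst k x a)"
        proof (rule Suc.IH[OF rRe less_imp_le[OF rq]])
          show "\<forall>i<k. real (Yst k x a i) \<le> xb n (q - r) i"
            unfolding qr by (rule xb_prop[OF X]) (use Ycomp[OF ah] in auto)
          show "2 ^ r + (if q - r \<le> T then (2 ^ T / 2 ^ (q - r) - 1) * P else 0) \<le> real (wt k r (Yst k x a))"
            using key[OF y1] True qr by simp
        qed
        have cN: "paul_wins k r (Nst k x a)"
        proof (rule Suc.IH[OF rRe less_imp_le[OF rq]])
          show "\<forall>i<k. real (Nst k x a i) \<le> xb n (q - r) i"
            unfolding qr by (rule xb_prop[OF X]) (use Ncomp[OF ah] in auto)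
          show "2 ^ r + (if q - r \<le> T then (2 ^ T / 2 ^ (q - r) - 1) * P else 0) \<le> real (wt k r (Nst k x a))"
            using key[OF y2] True qr by simp
        qed
        have "legal k x a" unfolding a_def by (rule hq_legal)
        then show ?thesis unfolding paul_wins.simps(2) using cY cN by blast
      next
        case False
        define b where "b = hq k x"
        have low: "\<forall>i<k. b i \<le> x i" unfolding b_def by (rule hq_low)
        have bh: "\<forall>j<k. b j = (x j + 1) div 2" unfolding b_def hq_def by simp
        have AB: "Bw k r x b \<le> Aw k r x b" "Aw k r x b \<le> Bw k r x b + k * binom_le r k"
          using AB_half[OF bh] by auto
        have lwe: "Aw k r x b + Bw k r x b = lw k (Suc r) x" by (rule AB_lw[OF low])
        have M1: "real n * (real (binom_le q k) - real (t choose k)) / 2 ^ t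
          + real ((k * k + k) * binom_le (Suc r) k) \<le> 2 ^ Suc r"
        proof -
          have "Re < Suc r" "T \<le> q - Suc r" using rRe False unfolding t_def by auto
          from Mid[rule_format, OF this(1) Suc.prems(2) this(2)] show ?thesis unfolding t_def .
        qed
        have tq: "t + Suc r = q" unfolding t_def using rq by simp
        have "real (lw k (Suc r) x) \<le> real n * (real (binom_le q k) - real (t choose k)) / 2 ^ t
            + real (k * k * binom_le (Suc r) k)"
          using lw_bound[OF X, of "Suc r"] tq by simp
        hence "real (lw k (Suc r) x) + real (k * binom_le (Suc r) k) \<le> 2 ^ Suc r"
          using M1 by (simp add: algebra_simps)
        hence "real (lw k (Suc r) x + k * binom_le (Suc r) k) \<le> real ((2::nat) ^ Suc r)"
          by simp
        hence "lw k (Suc r) x + k * binom_le (Suc r) k \<le> 2 ^ Suc r"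
          by (simp only: of_nat_le_iff)
        moreover have "k * binom_le r k \<le> k * binom_le (Suc r) k" by (intro mult_left_mono bl_mono_r) auto
        ultimately have A: "Aw k r x b \<le> 2 ^ r" using AB lwe by (simp only: power_Suc)
        hence B: "Bw k r x b \<le> 2 ^ r" using AB by simp
        define a where "a = b(k := 2 ^ r - Aw k r x b)"
        have F: "legal k x a \<and> 2 ^ r \<le> wt k r (Yst k x a) \<and> 2 ^ r \<le> wt k r (Nst k x a)"
          unfolding a_def by (rule fill[OF low A B W])
        have ah: "\<forall>j<k. a j = (x j + 1) div 2" using bh unfolding a_def by simp
        have ext: "\<not> (q - r \<le> T)" using False qr by simp
        have cY: "paul_wins k r (Yst k x a)"
        proof (rule Suc.IH[OF rRe less_imp_le[OF rq]])
          show "\<forall>i<k. real (Yst k x a i) \<le> xb n (q - r) i"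
            unfolding qr by (rule xb_prop[OF X]) (use Ycomp[OF ah] in auto)
          show "2 ^ r + (if q - r \<le> T then (2 ^ T / 2 ^ (q - r) - 1) * P else 0) \<le> real (wt k r (Yst k x a))"
          proof -
            have "real ((2::nat) ^ r) \<le> real (wt k r (Yst k x a))" using F by (simp only: of_nat_le_iff)
            thus ?thesis using ext by simp
          qed
        qed
        have cN: "paul_wins k r (Nst k x a)"
        proof (rule Suc.IH[OF rRe less_imp_le[OF rq]])
          show "\<forall>i<k. real (Nst k x a i) \<le> xb n (q - r) i"
            unfolding qr by (rule xb_prop[OF X]) (use Ncomp[OF ah] in auto)
          show "2 ^ r + (if q - r \<le> T then (2 ^ T / 2 ^ (q - r) - 1) * P else 0) \<le> real (wt k r (Nst k x a))"
          proof -
            have "real ((2::nat) ^ r) \<le> real (wt k r (Nst k x a))" using F by (simp only: of_nat_le_iff)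
            thus ?thesis using ext by simp
          qed
        qed
        show ?thesis unfolding paul_wins.simps(2) using cY cN F by blast
      qed
    qed
  qed
qed

lemma num_core:
  fixes N V b U W C K k1 Q R Tt :: real
  assumes V: "0 < V" and Tt: "0 < Tt" and N1: "Q / V \<le> N" and N2: "N * V \<le> Q + C * V"
    and VW: "V \<le> W * U" and W: "W \<le> k1 * b" and b: "1 \<le> b"
    and KU: "2 * K * k1 * U ^ 2 \<le> R" and CV: "2 * C * V ^ 2 \<le> Q" and Q: "Q = R * Tt"
    and U: "0 \<le> U" and K: "0 \<le> K" and k1: "0 \<le> k1" and C: "0 \<le> C"
  shows "N * (V - b) / Tt + K * U \<le> R"
proof -
  have Rp: "0 \<le> R" using KU K k1 U by (smt (verit) mult_nonneg_nonneg zero_le_power2)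
  have "Q / V * b \<le> N * b" using N1 b by (intro mult_right_mono) auto
  hence s1: "Q * b / V \<le> N * b" by simp
  have "C * V ^ 2 \<le> Q * b / 2"
  proof -
    have "Q \<le> Q * b" using b CV C V by (smt (verit) mult_le_cancel_left1 zero_le_power2 mult_nonneg_nonneg)
    thus ?thesis using CV by linarith
  qed
  hence s2: "C * V \<le> Q * b / (2 * V)" using V by (simp add: field_simps power2_eq_square)
  have "K * U * V \<le> K * U * (W * U)" using VW K U by (intro mult_left_mono) auto
  also have "\<dots> \<le> K * U * (k1 * b * U)" using W K U by (intro mult_left_mono mult_right_mono) auto
  also have "\<dots> = (K * k1 * U ^ 2) * b" by (simp add: power2_eq_square mult_ac)
  also have "\<dots> \<le> (R / 2) * b" using KU b by (intro mult_right_mono) auto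
  finally have "K * U * V * Tt \<le> (R / 2) * b * Tt" using Tt by (intro mult_right_mono) auto
  hence s3: "K * U * Tt \<le> Q * b / (2 * V)" using V Q by (simp add: field_simps)
  have "Q * b / V = Q * b / (2 * V) + Q * b / (2 * V)" by (simp add: field_simps)
  hence "N * V - N * b \<le> Q - K * U * Tt" using N2 s1 s2 s3 by linarith
  hence "N * (V - b) \<le> Q - K * U * Tt" by (simp add: algebra_simps)
  hence "N * (V - b) / Tt \<le> (Q - K * U * Tt) / Tt" using Tt by (simp add: divide_right_mono)
  also have "\<dots> = R - K * U" using Tt Q by (simp add: field_simps)
  finally show ?thesis by simp
qed

lemma bl_vand_le: "binom_le (t + r) k \<le> binom_le t k * binom_le r k"
proof -
  have "binom_le (t + r) k = (\<Sum>i\<le>k. (t choose i) * binom_le r (k - i))" by (rule bl_vand[symmetric])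
  also have "\<dots> \<le> (\<Sum>i\<le>k. (t choose i) * binom_le r k)" by (intro sum_mono mult_left_mono bl_mono) auto
  also have "\<dots> = binom_le t k * binom_le r k" unfolding binom_le_def by (simp add: sum_distrib_right)
  finally show ?thesis .
qed

lemma choose_le_bl: "(t choose k) \<le> binom_le (t + r) k"
proof -
  have "(t choose k) * binom_le r (k - k) \<le> (\<Sum>i\<le>k. (t choose i) * binom_le r (k - i))"
    by (rule member_le_sum) auto
  thus ?thesis using bl_vand[of t r k] by simp
qed

lemma bl_le_choose: "2 * k \<le> t \<Longrightarrow> binom_le t k \<le> (k + 1) * (t choose k)"
proof -
  assume tk: "2 * k \<le> t"
  have "binom_le t k \<le> (\<Sum>i\<le>k. t choose k)" unfolding binom_le_def
    by (rule sum_mono) (use tk in \<open>auto intro: binomial_mono\<close>)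
  thus ?thesis by simp
qed

lemma num_end_core:
  fixes N bi bk1 bk V Q E Tt L kk :: real
  assumes "0 \<le> N" "0 \<le> bi" "bi \<le> bk1" "L * bk1 = kk * bk" "bk \<le> V" "N * V \<le> 2 * Q"
    "Q = E * Tt" "2 * kk * E < L" "0 < Tt" "0 \<le> kk" "0 \<le> bk" "0 \<le> E"
  shows "N * bi / Tt < 1"
proof -
  have "0 \<le> 2 * kk * E" using assms by simp
  hence L0: "0 < L" using assms(8) by linarith
  have "N * bi * L \<le> N * bk1 * L" using assms L0 by (intro mult_right_mono mult_left_mono) auto
  also have "\<dots> = N * (kk * bk)" using assms(4) by (simp add: mult_ac)
  also have "\<dots> \<le> N * (kk * V)" using assms by (intro mult_left_mono) auto
  also have "\<dots> = kk * (N * V)" by (simp add: mult_ac)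
  also have "\<dots> \<le> kk * (2 * Q)" using assms by (intro mult_left_mono) auto
  also have "\<dots> = (2 * kk * E) * Tt" using assms(7) by (simp add: mult_ac)
  also have "\<dots> < L * Tt" using assms by (intro mult_strict_right_mono) auto
  finally have "N * bi * L < Tt * L" by (simp add: mult_ac)
  hence "N * bi < Tt" using L0 by simp
  thus ?thesis using assms(9) by simp
qed


lemma PE2:
  fixes c :: nat
  assumes "1 \<le> c" "c * 2 ^ (2 * k) * (2 * k + 1) ^ (2 * k + 1) \<le> r"
  shows "c * binom_le r k ^ 2 \<le> 2 ^ r"
proof -
  have "c * (r + 1) ^ (2 * k) \<le> 2 ^ r" using poly_exp[of c "2 * k" r] assms by simp
  moreover have "binom_le r k ^ 2 \<le> ((r + 1) ^ k) ^ 2" by (intro power_mono bl_poly) auto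
  hence "binom_le r k ^ 2 \<le> (r + 1) ^ (2 * k)" by (simp add: power_mult[symmetric] mult.commute)
  ultimately show ?thesis by (meson mult_le_mono2 order_trans)
qed

lemma wt_init: "wt k r (init_state n) = n * binom_le r k"
proof -
  have "wt k r (init_state n) = (\<Sum>i\<le>k. if i = 0 then n * binom_le r (k - i) else 0)"
    unfolding wt_def init_state_def by (rule sum.cong) auto
  also have "\<dots> = n * binom_le r k" by (subst sum.delta) auto
  finally show ?thesis .
qed

lemma absorb: "1 \<le> k \<Longrightarrow> (t - (k - 1)) * (t choose (k - 1)) = k * (t choose k)"
proof -
  assume k: "1 \<le> k"
  have "(t - (k - 1)) * (t choose (k - 1)) = t * ((t - 1) choose (k - 1))" by (rule binomial_absorb_comp)
  also have "\<dots> = Suc (k - 1) * (t choose Suc (k - 1))" by (rule binomial_absorption[symmetric])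
  also have "Suc (k - 1) = k" using k by simp
  finally show ?thesis .
qed


lemma upper:
  fixes k q :: nat
  assumes qs: "2 * k + (k * k * k + (2 * (k * k + k) * (k + 1) + 2 * (k * k) + 1) * 2 ^ (2 * k) * (2 * k + 1) ^ (2 * k + 1))
     + (2 * ((k + 1) * 2 ^ (2 * k) + 1)) * 2 ^ (2 * k) * (2 * k + 1) ^ (2 * k + 1)
     + ((k * k * k + (2 * (k * k + k) * (k + 1) + 2 * (k * k) + 1) * 2 ^ (2 * k) * (2 * k + 1) ^ (2 * k + 1))
        + k + 2 * k * 2 ^ (k * k * k + (2 * (k * k + k) * (k + 1) + 2 * (k * k) + 1) * 2 ^ (2 * k) * (2 * k + 1) ^ (2 * k + 1)) + 1) \<le> q"
  shows "\<exists>n. paul_wins k q (init_state n) \<and>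
           real n \<le> 2 ^ q / real (binom_le q k) + real ((k + 1) * 2 ^ (2 * k) + 1)"
proof -
  define T where "T = 2 * k"
  define C0 :: nat where "C0 = (k + 1) * 2 ^ T + 1"
  define c1 :: nat where "c1 = 2 * (k * k + k) * (k + 1) + 2 * (k * k) + 1"
  define R0 where "R0 = c1 * 2 ^ (2 * k) * (2 * k + 1) ^ (2 * k + 1)"
  define Re where "Re = k * k * k + R0"
  define R1 where "R1 = (2 * C0) * 2 ^ (2 * k) * (2 * k + 1) ^ (2 * k + 1)"
  have qs': "T + Re + R1 + (Re + k + 2 * k * 2 ^ Re + 1) \<le> q"
    using qs unfolding T_def C0_def c1_def R0_def Re_def R1_def by simp
  define V where "V = binom_le q k"
  have V1: "1 \<le> V" unfolding V_def by (rule bl_pos)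
  define X :: real where "X = 2 ^ q / real V"
  have X0: "0 \<le> X" unfolding X_def by simp
  define n where "n = nat \<lceil>X\<rceil> + (k + 1) * 2 ^ T"
  have nX: "real (nat \<lceil>X\<rceil>) = of_int \<lceil>X\<rceil>" using X0 by simp
  have hn1: "X + real ((k + 1) * 2 ^ T) \<le> real n"
    unfolding n_def using nX by (simp add: le_of_int_ceiling)
  have hn2: "real n \<le> X + real C0"
    unfolding n_def C0_def using nX of_int_ceiling_le_add_one[of X] by simp
  have Vr: "real V > 0" using V1 by simp
  have c1pos: "1 \<le> c1" unfolding c1_def by simp
  have U2: "c1 * binom_le r k ^ 2 \<le> 2 ^ r" if "R0 \<le> r" for r
    using PE2[OF c1pos] that unfolding R0_def by simp
  have HR: "\<forall>r\<ge>R0. 2 * (k * k) * binom_le r k \<le> 2 ^ r"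
  proof (intro allI impI)
    fix r assume r: "R0 \<le> r"
    have "binom_le r k \<le> binom_le r k ^ 2" using bl_pos[of r k] by (simp add: power2_eq_square)
    hence "2 * (k * k) * binom_le r k \<le> 2 * (k * k) * binom_le r k ^ 2" by simp
    also have "\<dots> \<le> c1 * binom_le r k ^ 2" unfolding c1_def by (intro mult_right_mono) auto
    also have "\<dots> \<le> 2 ^ r" using U2[OF r] .
    finally show "2 * (k * k) * binom_le r k \<le> 2 ^ r" .
  qed
  have KU: "2 * (k * k + k) * (k + 1) * binom_le r k ^ 2 \<le> 2 ^ r" if "R0 \<le> r" for r
  proof -
    have "2 * (k * k + k) * (k + 1) * binom_le r k ^ 2 \<le> c1 * binom_le r k ^ 2"
      unfolding c1_def by (intro mult_right_mono) auto
    also have "\<dots> \<le> 2 ^ r" using U2[OF that] .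
    finally show ?thesis .
  qed
  have CVn: "2 * C0 * V ^ 2 \<le> 2 ^ q"
  proof -
    have "1 \<le> 2 * C0" unfolding C0_def by simp
    moreover have "2 * C0 * 2 ^ (2 * k) * (2 * k + 1) ^ (2 * k + 1) \<le> q" using qs' unfolding R1_def by simp
    ultimately show ?thesis using PE2[of "2 * C0" k q] unfolding V_def by simp
  qed
  have CV: "2 * real C0 * real V ^ 2 \<le> 2 ^ q"
  proof -
    have "real (2 * C0 * V ^ 2) \<le> real ((2::nat) ^ q)" using CVn by (simp only: of_nat_le_iff)
    thus ?thesis by simp
  qed
  have NV: "real n * real V \<le> 2 ^ q + real C0 * real V"
  proof -
    have "real n * real V \<le> (X + real C0) * real V" using hn2 Vr by (intro mult_right_mono) auto
    also have "\<dots> = 2 ^ q + real C0 * real V" unfolding X_def using Vr by (simp add: field_simps)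
    finally show ?thesis .
  qed
  have CV1: "real C0 * real V \<le> 2 ^ q / 2"
  proof -
    have v: "1 \<le> real V" using V1 by simp
    have "real V * 1 \<le> real V * real V" using v by (intro mult_left_mono) auto
    hence "real C0 * real V \<le> real C0 * (real V * real V)" by (intro mult_left_mono) auto
    hence "real C0 * real V \<le> real C0 * real V ^ 2" by (simp add: power2_eq_square)
    thus ?thesis using CV by simp
  qed
  have End: "\<forall>i<k. real n * real ((q - Re) choose i) / 2 ^ (q - Re) < 1"
  proof (intro allI impI)
    fix i assume ik: "i < k"
    define t where "t = q - Re"
    have tb: "k + 2 * k * 2 ^ Re + 1 \<le> t" using qs' unfolding t_def by simp
    have k1: "1 \<le> k" using ik by simp
    have "1 \<le> (2::nat) ^ Re" by simp
    hence "k \<le> k * 2 ^ Re" by simp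
    hence "2 * (k - 1) \<le> t" using tb by linarith
    hence bi: "t choose i \<le> t choose (k - 1)" using ik by (intro binomial_mono) auto
    have ab: "real (t - (k - 1)) * real (t choose (k - 1)) = real k * real (t choose k)"
      using absorb[OF k1, of t] by (metis of_nat_mult)
    have bk: "real (t choose k) \<le> real V"
      unfolding V_def using choose_le_bl[of t k Re] qs' unfolding t_def by simp
    have "(0::real) \<le> 2 ^ q" by simp
    hence "real n * real V \<le> 2 * 2 ^ q" using NV CV1 by linarith
    moreover have "(2::real) ^ q = 2 ^ Re * 2 ^ t" unfolding t_def using qs' by (simp add: power_add[symmetric])
    moreover have "2 * real k * 2 ^ Re < real (t - (k - 1))"
    proof -
      have "2 * k * 2 ^ Re < t - (k - 1)" using tb k1 by simp
      hence "real (2 * k * 2 ^ Re) < real (t - (k - 1))" by (simp only: of_nat_less_iff)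
      thus ?thesis by simp
    qed
    ultimately show "real n * real ((q - Re) choose i) / 2 ^ (q - Re) < 1"
      unfolding t_def[symmetric]
      using num_end_core[of "real n" "real (t choose i)" "real (t choose (k - 1))" "real (t - (k - 1))"
          "real k" "real (t choose k)" "real V" "2 ^ q" "2 ^ Re" "2 ^ t"] bi ab bk
      by simp
  qed
  have Mid: "\<forall>r. Re < r \<longrightarrow> r \<le> q \<longrightarrow> T \<le> q - r \<longrightarrow>
        real n * (real (binom_le q k) - real ((q - r) choose k)) / 2 ^ (q - r)
          + real ((k * k + k) * binom_le r k) \<le> 2 ^ r"
  proof (intro allI impI)
    fix r assume r1: "Re < r" and r2: "r \<le> q" and r3: "T \<le> q - r"
    define t where "t = q - r"
    have tr: "t + r = q" unfolding t_def using r2 by simp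
    have VW: "real V \<le> real (binom_le t k) * real (binom_le r k)"
    proof -
      have "V \<le> binom_le t k * binom_le r k" unfolding V_def using bl_vand_le[of t r k] tr by simp
      hence "real V \<le> real (binom_le t k * binom_le r k)" by (simp only: of_nat_le_iff)
      thus ?thesis by simp
    qed
    have W: "real (binom_le t k) \<le> real (k + 1) * real (t choose k)"
    proof -
      have "binom_le t k \<le> (k + 1) * (t choose k)" using r3 unfolding T_def t_def by (intro bl_le_choose) simp
      hence "real (binom_le t k) \<le> real ((k + 1) * (t choose k))" by (simp only: of_nat_le_iff)
      thus ?thesis by (simp only: of_nat_mult)
    qed
    have b1: "1 \<le> real (t choose k)"
    proof -
      have "k \<le> t" using r3 unfolding T_def t_def by simp
      hence "0 < t choose k" by (simp add: zero_less_binomial)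
      hence "1 \<le> t choose k" by linarith
      hence "real (1::nat) \<le> real (t choose k)" by (simp only: of_nat_le_iff)
      thus ?thesis by simp
    qed
    have KUr: "2 * real (k * k + k) * real (k + 1) * real (binom_le r k) ^ 2 \<le> 2 ^ r"
    proof -
      have "R0 \<le> r" using r1 unfolding Re_def by simp
      hence "real (2 * (k * k + k) * (k + 1) * binom_le r k ^ 2) \<le> real ((2::nat) ^ r)"
        using KU by (simp only: of_nat_le_iff)
      thus ?thesis by (simp only: of_nat_mult of_nat_power of_nat_numeral)
    qed
    have "0 \<le> real ((k + 1) * 2 ^ T)" by simp
    hence N1: "2 ^ q / real V \<le> real n" using hn1 unfolding X_def by linarith
    have Q: "(2::real) ^ q = 2 ^ r * 2 ^ t" using tr by (simp add: power_add[symmetric] add.commute)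
    have "real n * (real V - real (t choose k)) / 2 ^ t + real (k * k + k) * real (binom_le r k) \<le> 2 ^ r"
      by (rule num_core[OF Vr _ N1 NV VW W b1 KUr CV Q]) simp_all
    thus "real n * (real (binom_le q k) - real ((q - r) choose k)) / 2 ^ (q - r)
          + real ((k * k + k) * binom_le r k) \<le> 2 ^ r"
      unfolding t_def V_def by simp
  qed
  define P :: real where "P = real ((k + 1) * V)"
  have Pb: "real (k * binom_le q k + 1) \<le> P"
    unfolding P_def V_def[symmetric] using V1 by simp
  have Req: "Re \<le> q" using qs' by simp
  have Xb: "\<forall>i<k. real (init_state n i) \<le> xb n (q - q) i"
    unfolding init_state_def xb_def by simp
  have Wt: "2 ^ q + (if q - q \<le> T then (2 ^ T / 2 ^ (q - q) - 1) * P else 0) \<le> real (wt k q (init_state n))"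
  proof -
    have "real (wt k q (init_state n)) = real n * real V" unfolding wt_init V_def by simp
    moreover have "(X + real ((k + 1) * 2 ^ T)) * real V \<le> real n * real V"
      using hn1 Vr by (intro mult_right_mono) auto
    moreover have "(X + real ((k + 1) * 2 ^ T)) * real V = 2 ^ q + 2 ^ T * P"
      unfolding X_def P_def using Vr by (simp add: field_simps)
    ultimately have A: "2 ^ q + 2 ^ T * P \<le> real (wt k q (init_state n))" by linarith
    have "0 \<le> P" unfolding P_def by simp
    moreover have "((2::real) ^ T - 1) * P = 2 ^ T * P - P" by (simp add: algebra_simps)
    ultimately have "2 ^ q + ((2::real) ^ T - 1) * P \<le> real (wt k q (init_state n))" using A by linarith
    thus ?thesis by simp
  qed
  have "paul_wins k q (init_state n)"
    using main[OF HR Re_def End Mid Pb Req order_refl Xb Wt] .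
  moreover have "real n \<le> 2 ^ q / real (binom_le q k) + real ((k + 1) * 2 ^ (2 * k) + 1)"
    using hn2 unfolding X_def V_def C0_def T_def .
  ultimately show ?thesis by blast
qed


theorem theorem3:
  fixes k :: nat
  shows "\<exists>(qs::nat) (C::real). \<forall>q\<ge>qs.
           2 ^ q / real (binom_le q k) \<le> real (Fstar k q) \<and>
           real (Fstar k q) \<le> 2 ^ q / real (binom_le q k) + C"
proof -
  define qs :: nat where "qs = 2 * k + (k * k * k + (2 * (k * k + k) * (k + 1) + 2 * (k * k) + 1) * 2 ^ (2 * k) * (2 * k + 1) ^ (2 * k + 1))      + (2 * ((k + 1) * 2 ^ (2 * k) + 1)) * 2 ^ (2 * k) * (2 * k + 1) ^ (2 * k + 1)      + ((k * k * k + (2 * (k * k + k) * (k + 1) + 2 * (k * k) + 1) * 2 ^ (2 * k) * (2 * k + 1) ^ (2 * k + 1))         + k + 2 * k * 2 ^ (k * k * k + (2 * (k * k + k) * (k + 1) + 2 * (k * k) + 1) * 2 ^ (2 * k) * (2 * k + 1) ^ (2 * k + 1)) + 1)"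
  define C :: real where "C = real ((k + 1) * 2 ^ (2 * k) + 1)"
  have "\<forall>q\<ge>qs. 2 ^ q / real (binom_le q k) \<le> real (Fstar k q) \<and>
           real (Fstar k q) \<le> 2 ^ q / real (binom_le q k) + C"
  proof (intro allI impI)
    fix q assume q: "qs \<le> q"
    obtain n where n: "paul_wins k q (init_state n)"
        "real n \<le> 2 ^ q / real (binom_le q k) + real ((k + 1) * 2 ^ (2 * k) + 1)"
      using upper[of k q] q unfolding qs_def by blast
    have F1: "Fstar k q \<le> n" unfolding Fstar_def by (rule Least_le) (rule n(1))
    have F2: "paul_wins k q (init_state (Fstar k q))" unfolding Fstar_def by (rule LeastI) (rule n(1))
    have "2 ^ q \<le> wt k q (init_state (Fstar k q))" by (rule lower[OF F2])
    hence "2 ^ q \<le> Fstar k q * binom_le q k" by (simp add: wt_init)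
    hence "real ((2::nat) ^ q) \<le> real (Fstar k q * binom_le q k)" by (simp only: of_nat_le_iff)
    hence "2 ^ q \<le> real (Fstar k q) * real (binom_le q k)" by simp
    moreover have "0 < real (binom_le q k)" using bl_pos[of q k] by simp
    ultimately have L: "2 ^ q / real (binom_le q k) \<le> real (Fstar k q)" by (simp add: divide_le_eq)
    have "real (Fstar k q) \<le> real n" using F1 by simp
    hence "real (Fstar k q) \<le> 2 ^ q / real (binom_le q k) + C" using n(2) unfolding C_def by linarith
    with L show "2 ^ q / real (binom_le q k) \<le> real (Fstar k q) \<and>
           real (Fstar k q) \<le> 2 ^ q / real (binom_le q k) + C" by simp
  qed
  thus ?thesis by blast
qed

end
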